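(* Let $(F_\epsilon)_{\epsilon>0}$ be a perturbation of a cellular automaton. Then: (i) if $\mathcal{M}_\epsilon$ is a singleton for all $\epsilon>0$, then $\lim_{\epsilon\to0}\mathrm{diam}(\mathcal{M}_\epsilon)=0$; (ii) if $\mathcal{M}_{\lim}$ is a singleton, then $\lim_{\epsilon\to0}\mathrm{diam}(\mathcal{M}_\epsilon)=0$; (iii) if $\lim_{\epsilon\to0}\mathrm{diam}(\mathcal{M}_\epsilon)=0$, then $\mathcal{M}_{\lim}$ is uniformly approached; (iv) if $\mathcal{M}_{\lim}$ is uniformly approached, then $\liminf_{\epsilon\to0}\mathrm{diam}(\mathcal{M}_\epsilon)=0$.
   Context: $\mathcal{A}$ finite; $\mathcal{M}(\mathcal{A}^{\mathbb{Z}})$ is the set of shift-invariant Borel probability measures with the weak topology, metrized by $d_{\mathcal{M}}(\mu,\nu)=\sum_{n\ge0}2^{-n}\frac12\sum_{u\in\mathcal{A}^{[-n,n]}}|\mu([u])-\nu([u])|$; $\mathrm{diam}(\mathcal{K})=\max\{d_{\mathcal{M}}(\mu,\nu):\mu,\nu\in\mathcal{K}\}$ for compact $\mathcal{K}$. A perturbation of a CA $F$ (neighborhood $\mathcal{N}$, local rule $f$) is a family $(F_\epsilon)_{\epsilon>0}$ of probabilistic cellular automata with neighborhood $\mathcal{N}$ whose local stochastic matrices $f_\epsilon$ satisfy $f_\epsilon(u,f(u))\ge1-\epsilon$; they act on measures via $F_\epsilon(x,[w]_U)=\prod_{i\in U}f_\epsilon(x_{i+\mathcal{N}},w_i)$.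 $\mathcal{M}_\epsilon$ is the set of $\mu\in\mathcal{M}(\mathcal{A}^{\mathbb{Z}})$ with $F_\epsilon\mu=\mu$; $\mathcal{M}_{\lim}$ is the set of limits of sequences $\mu_n\in\mathcal{M}_{\epsilon_n}$ with $\epsilon_n\to0$, $\epsilon_n>0$. $\mathcal{M}_{\lim}$ is uniformly approached if for every family $\pi_\epsilon\in\mathcal{M}_\epsilon$ the set of accumulation points of $\pi_\epsilon$ as $\epsilon\to0$ equals $\mathcal{M}_{\lim}$. *)

theory Defs
  imports "HOL-Probability.Probability"
begin

text \<open>Configurations of the full shift: functions int => 'a, 'a a finite alphabet.
  Borel sigma-algebra of the product (discrete) topology = product sigma algebra.\<close>

definition shift_space :: "(int \<Rightarrow> 'a) measure" where
  "shift_space = PiM UNIV (\<lambda>_. count_space UNIV)"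

definition shift_map :: "(int \<Rightarrow> 'a) \<Rightarrow> (int \<Rightarrow> 'a)" where
  "shift_map x = (\<lambda>i. x (i + 1))"

definition SIM :: "(int \<Rightarrow> 'a::finite) measure set" where
  "SIM = {\<mu>. prob_space \<mu> \<and> sets \<mu> = sets shift_space
              \<and> distr \<mu> shift_space shift_map = \<mu>}"

definition cyl :: "int set \<Rightarrow> (int \<Rightarrow> 'a) \<Rightarrow> (int \<Rightarrow> 'a) set" where
  "cyl U w = {x. \<forall>i\<in>U. x i = w i}"

definition dM :: "(int \<Rightarrow> 'a::finite) measure \<Rightarrow> (int \<Rightarrow> 'a) measure \<Rightarrow> real" where
  "dM \<mu> \<nu> = (\<Sum>n. (1/2) ^ n * (1/2) *
      (\<Sum>u\<in>PiE {-int n..int n} (\<lambda>_. UNIV).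
          \<bar>measure \<mu> (cyl {-int n..int n} u) - measure \<nu> (cyl {-int n..int n} u)\<bar>))"

definition diamM :: "(int \<Rightarrow> 'a::finite) measure set \<Rightarrow> real" where
  "diamM K = Sup {dM \<mu> \<nu> | \<mu> \<nu>. \<mu> \<in> K \<and> \<nu> \<in> K}"

definition pat :: "(int \<Rightarrow> 'a) \<Rightarrow> int \<Rightarrow> int set \<Rightarrow> (int \<Rightarrow> 'a)" where
  "pat x i N = restrict (\<lambda>j. x (i + j)) N"

definition perturbation ::
  "int set \<Rightarrow> ((int \<Rightarrow> 'a::finite) \<Rightarrow> 'a) \<Rightarrow> (real \<Rightarrow> (int \<Rightarrow> 'a) \<Rightarrow> 'a \<Rightarrow> real) \<Rightarrow> bool" where
  "perturbation N f feps \<longleftrightarrow> finite N \<and>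
     (\<forall>eps>0. \<forall>u\<in>extensional N.
        (\<forall>b. feps eps u b \<ge> 0) \<and> (\<Sum>b\<in>UNIV. feps eps u b) = 1
        \<and> feps eps u (f u) \<ge> 1 - eps)"

text \<open>M_eps: shift-invariant measures with F_eps mu = mu, i.e.
  mu([w]_U) = integral of prod_{i in U} f_eps(x_{i+N}, w_i) for all finite U, w.\<close>
definition Meps ::
  "int set \<Rightarrow> (real \<Rightarrow> (int \<Rightarrow> 'a::finite) \<Rightarrow> 'a \<Rightarrow> real) \<Rightarrow> real \<Rightarrow> (int \<Rightarrow> 'a) measure set" where
  "Meps N feps eps = {\<mu>\<in>SIM. \<forall>U w. finite U \<longrightarrow>
      measure \<mu> (cyl U w) = (\<integral>x. (\<Prod>i\<in>U. feps eps (pat x i N) (w i)) \<partial>\<mu>)}"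

definition Mlim ::
  "int set \<Rightarrow> (real \<Rightarrow> (int \<Rightarrow> 'a::finite) \<Rightarrow> 'a \<Rightarrow> real) \<Rightarrow> (int \<Rightarrow> 'a) measure set" where
  "Mlim N feps = {\<mu>\<in>SIM. \<exists>e m. (\<forall>n. e n > 0) \<and> e \<longlonglongrightarrow> 0 \<and>
      (\<forall>n. m n \<in> Meps N feps (e n)) \<and> (\<lambda>n. dM (m n) \<mu>) \<longlonglongrightarrow> 0}"

definition acc_pts :: "(real \<Rightarrow> (int \<Rightarrow> 'a::finite) measure) \<Rightarrow> (int \<Rightarrow> 'a) measure set" where
  "acc_pts \<pi> = {\<mu>\<in>SIM. \<exists>e. (\<forall>n. e n > 0) \<and> e \<longlonglongrightarrow> 0 \<and> (\<lambda>n. dM (\<pi> (e n)) \<mu>) \<longlonglongrightarrow> 0}"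

definition uniformly_approached ::
  "int set \<Rightarrow> (real \<Rightarrow> (int \<Rightarrow> 'a::finite) \<Rightarrow> 'a \<Rightarrow> real) \<Rightarrow> bool" where
  "uniformly_approached N feps \<longleftrightarrow>
     (\<forall>\<pi>. (\<forall>eps>0. \<pi> eps \<in> Meps N feps eps) \<longrightarrow> acc_pts \<pi> = Mlim N feps)"

end

theory Submission
  imports Defs "HOL-Library.Diagonal_Subsequence"
begin

lemma space_ss[simp]: "space (shift_space :: (int \<Rightarrow> 'a) measure) = UNIV"
  by (simp add: shift_space_def space_PiM)

lemma comp_meas[measurable]: "(\<lambda>x. x i) \<in> measurable shift_space (count_space UNIV)"
  unfolding shift_space_def by measurable

lemma cyl_sets[measurable]:
  assumes "finite J" shows "cyl J w \<in> sets shift_space"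
proof -
  have "cyl J w = {x \<in> space shift_space. \<forall>i\<in>J. x i = w i}"
    by (auto simp: cyl_def)
  also have "\<dots> \<in> sets shift_space"
    using assms by measurable
  finally show ?thesis .
qed

lemma cyl_partition:
  assumes "finite H"
  shows "x \<in> cyl H v \<and> v \<in> PiE H (\<lambda>_. UNIV) \<longleftrightarrow> v = restrict x H"
  by (auto simp: cyl_def PiE_def extensional_def restrict_def)

lemma cylfun:
  fixes g :: "(int \<Rightarrow> 'a::finite) \<Rightarrow> real"
  assumes P: "prob_space M" and S: "sets M = sets shift_space" and H: "finite H"
    and g: "\<And>x y. restrict x H = restrict y H \<Longrightarrow> g x = g y"
  shows "g \<in> borel_measurable M" "integrable M g"
    "integral\<^sup>L M g = (\<Sum>v\<in>PiE H (\<lambda>_. UNIV). g v * measure M (cyl H v))"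
proof -
  have fin: "emeasure M A < \<top>" for A using finite_measure.emeasure_finite[OF prob_space.finite_measure[OF P]] by (simp add: less_top[symmetric])
  have eq: "g x = (\<Sum>v\<in>PiE H (\<lambda>_. UNIV). g v * indicator (cyl H v) x)" for x
  proof -
    have "(\<Sum>v\<in>PiE H (\<lambda>_. UNIV). g v * indicator (cyl H v) x)
        = (\<Sum>v\<in>{restrict x H}. g v * indicator (cyl H v) x)"
      apply (rule sum.mono_neutral_right)
      using H cyl_partition[OF H, of x] by (auto simp: finite_PiE indicator_def)
    also have "\<dots> = g (restrict x H)"
      using cyl_partition[OF H, of x "restrict x H"] by (simp add: indicator_def)
    also have "\<dots> = g x" by (rule g) simp
    finally show ?thesis by simp
  qed
  have cs: "cyl H v \<in> sets M" for v using S H by simp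
  have int: "integrable M (\<lambda>x. \<Sum>v\<in>PiE H (\<lambda>_. UNIV). g v * indicator (cyl H v) x)"
    by (intro Bochner_Integration.integrable_sum Bochner_Integration.integrable_mult_right Bochner_Integration.integrable_real_indicator) (auto simp: cs fin)
  show "integrable M g" using int by (subst ext[OF eq])
  then show "g \<in> borel_measurable M" by auto
  have "integral\<^sup>L M g = integral\<^sup>L M (\<lambda>x. \<Sum>v\<in>PiE H (\<lambda>_. UNIV). g v * indicator (cyl H v) x)"
    by (subst ext[OF eq]) simp
  also have "\<dots> = (\<Sum>v\<in>PiE H (\<lambda>_. UNIV). g v * measure M (cyl H v))"
    using cs fin by (subst Bochner_Integration.integral_sum) (auto simp: sets.Int_space_eq2)
  finally show "integral\<^sup>L M g = (\<Sum>v\<in>PiE H (\<lambda>_. UNIV). g v * measure M (cyl H v))" .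
qed

lemma cyl_sum:
  fixes M :: "(int \<Rightarrow> 'a::finite) measure"
  assumes P: "prob_space M" and S: "sets M = sets shift_space" and H: "finite H" and JH: "J \<subseteq> H"
  shows "measure M (cyl J w) = (\<Sum>v\<in>{v\<in>PiE H (\<lambda>_. UNIV). \<forall>i\<in>J. v i = w i}. measure M (cyl H v))"
proof -
  have fJ: "finite J" using H JH finite_subset by blast
  have "measure M (cyl J w) = integral\<^sup>L M (indicator (cyl J w))"
    using S fJ by (simp add: sets.Int_space_eq2)
  also have "\<dots> = (\<Sum>v\<in>PiE H (\<lambda>_. UNIV). indicator (cyl J w) v * measure M (cyl H v))"
  proof (rule cylfun(3)[OF P S H])
    fix x y :: "int \<Rightarrow> 'a" assume "restrict x H = restrict y H"
    then have "\<forall>i\<in>H. x i = y i" by (metis restrict_apply')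
    then show "indicator (cyl J w) x = (indicator (cyl J w) y :: real)"
      using JH by (auto simp: indicator_def cyl_def) (metis subsetD)
  qed
  also have "\<dots> = (\<Sum>v\<in>PiE H (\<lambda>_. UNIV). if (\<forall>i\<in>J. v i = w i) then measure M (cyl H v) else 0)"
    by (intro sum.cong) (auto simp: indicator_def cyl_def)
  also have "\<dots> = (\<Sum>v\<in>{v\<in>PiE H (\<lambda>_. UNIV). \<forall>i\<in>J. v i = w i}. measure M (cyl H v))"
    using H by (simp add: sum.inter_filter finite_PiE)
  finally show ?thesis .
qed

lemma cyl_empty[simp]: "cyl {} w = UNIV" by (simp add: cyl_def)

lemma cyl_total:
  fixes M :: "(int \<Rightarrow> 'a::finite) measure"
  assumes P: "prob_space M" and S: "sets M = sets shift_space" and H: "finite H"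
  shows "(\<Sum>v\<in>PiE H (\<lambda>_. UNIV). measure M (cyl H v)) = 1"
proof -
  have sp: "space M = UNIV" using S sets_eq_imp_space_eq by fastforce
  have "measure M (cyl {} (\<lambda>_. undefined)) = 1"
    using prob_space.prob_space[OF P] sp by simp
  then show ?thesis using cyl_sum[OF P S H, of "{}"] by simp
qed

lemma measures_eqI:
  fixes M N :: "(int \<Rightarrow> 'a::finite) measure"
  assumes PM: "prob_space M" and SM: "sets M = sets shift_space"
    and PN: "prob_space N" and SN: "sets N = sets shift_space"
    and eq: "\<And>J w. finite J \<Longrightarrow> measure M (cyl J w) = measure N (cyl J w)"
  shows "M = N"
proof (rule measure_eqI_PiM_infinite[where I=UNIV and M="\<lambda>_. count_space UNIV"])
  show "sets M = sets (PiM UNIV (\<lambda>_. count_space UNIV))" using SM by (simp add: shift_space_def)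
  show "sets N = sets (PiM UNIV (\<lambda>_. count_space UNIV))" using SN by (simp add: shift_space_def)
  show "finite_measure M" using PM by (rule prob_space.finite_measure)
  fix A J assume J: "finite J" "J \<subseteq> (UNIV::int set)"
  define E where "E = prod_emb UNIV (\<lambda>_. count_space (UNIV::'a set)) J (Pi\<^sub>E J A)"
  have E: "E = {x. \<forall>j\<in>J. x j \<in> A j}"
    by (auto simp: E_def prod_emb_def space_PiM PiE_def extensional_def Pi_def)
  have g: "indicator E x = (indicator E y :: real)" if "restrict x J = restrict y J" for x y
  proof -
    have "\<forall>i\<in>J. x i = y i" using that by (metis restrict_apply')
    then show ?thesis by (auto simp: indicator_def E)
  qed
  have ES: "E \<in> sets shift_space" unfolding E_def shift_space_def
    using J by (intro sets_PiM_I) auto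
  have "measure M E = integral\<^sup>L M (indicator E)" using SM ES by (simp add: sets.Int_space_eq2)
  also have "\<dots> = (\<Sum>v\<in>PiE J (\<lambda>_. UNIV). indicator E v * measure M (cyl J v))"
    by (rule cylfun(3)[OF PM SM J(1) g])
  also have "\<dots> = (\<Sum>v\<in>PiE J (\<lambda>_. UNIV). indicator E v * measure N (cyl J v))"
    using eq J by simp
  also have "\<dots> = integral\<^sup>L N (indicator E)"
    by (rule cylfun(3)[OF PN SN J(1) g, symmetric])
  also have "\<dots> = measure N E" using SN ES by (simp add: sets.Int_space_eq2)
  finally have "measure M E = measure N E" .
  then show "emeasure M E = emeasure N E"
    using PM PN by (simp add: finite_measure.emeasure_eq_measure prob_space.finite_measure)
qed

lemma shift_meas[measurable]: "shift_map \<in> measurable shift_space shift_space"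
  unfolding shift_map_def shift_space_def
  by (rule measurable_PiM_single') (auto simp: space_PiM)

lemma shift_vimage: "shift_map -` cyl J w = cyl ((\<lambda>i. i+1) ` J) (\<lambda>i. w (i - 1))"
  by (auto simp: shift_map_def cyl_def)

lemma SIM_iff:
  fixes M :: "(int \<Rightarrow> 'a::finite) measure"
  assumes P: "prob_space M" and S: "sets M = sets shift_space"
  shows "M \<in> SIM \<longleftrightarrow> (\<forall>J w. finite J \<longrightarrow>
      measure M (cyl ((\<lambda>i. i+1) ` J) (\<lambda>i. w (i - 1))) = measure M (cyl J w))"
proof -
  have sp: "space M = UNIV" using S sets_eq_imp_space_eq by fastforce
  have sm: "shift_map \<in> measurable M shift_space" by (subst measurable_cong_sets[OF S refl]) (rule shift_meas)
  have md: "measure (distr M shift_space shift_map) (cyl J w) = measure M (cyl ((\<lambda>i. i+1) ` J) (\<lambda>i. w (i - 1)))"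
    if "finite J" for J w
    using measure_distr[OF sm cyl_sets[OF that, of w]] by (simp add: sp shift_vimage)
  show ?thesis
  proof
    assume "M \<in> SIM"
    then have "distr M shift_space shift_map = M" by (simp add: SIM_def)
    then show "\<forall>J w. finite J \<longrightarrow> measure M (cyl ((\<lambda>i. i+1) ` J) (\<lambda>i. w (i - 1))) = measure M (cyl J w)"
      using md by metis
  next
    assume H: "\<forall>J w. finite J \<longrightarrow> measure M (cyl ((\<lambda>i. i+1) ` J) (\<lambda>i. w (i - 1))) = measure M (cyl J w)"
    have "distr M shift_space shift_map = M"
    proof (rule measures_eqI)
      show "prob_space (distr M shift_space shift_map)" using P sm by (rule prob_space.prob_space_distr)
      show "sets (distr M shift_space shift_map) = sets shift_space" by simp
    qed (use P S in simp_all, simp add: md H)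
    then show "M \<in> SIM" using P S by (simp add: SIM_def)
  qed
qed

definition TT :: "(int \<Rightarrow> 'a) topology" where
  "TT = product_topology (\<lambda>_. discrete_topology UNIV) UNIV"

lemma TT_space[simp]: "topspace TT = UNIV"
  by (simp add: TT_def)

lemma TT_compact: "compact_space (TT :: (int \<Rightarrow> 'a::finite) topology)"
  unfolding TT_def compact_space_product_topology by (simp add: compact_space_discrete_topology)

lemma TT_closed_coord: "closedin TT {x. x j = a}"
proof -
  have "closedin TT {x \<in> topspace TT. (\<lambda>x. x j) x \<in> {a}}"
    unfolding TT_def
    by (rule closedin_continuous_map_preimage[OF continuous_map_product_projection]) auto
  then show ?thesis by simp
qed

lemma TT_closed_emb:
  assumes J: "finite J"
  shows "closedin (TT :: (int \<Rightarrow> 'a::finite) topology) {x. restrict x J \<in> X}"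
proof -
  have cu: "closedin TT {x. \<forall>j\<in>J. x j = u j}" for u :: "int \<Rightarrow> 'a"
  proof (cases "J = {}")
    case True then show ?thesis using closedin_topspace[of TT] by simp
  next
    case False
    have "{x. \<forall>j\<in>J. x j = u j} = \<Inter>((\<lambda>j. {x. x j = u j}) ` J)" by auto
    also have "closedin TT \<dots>" using False by (intro closedin_Inter) (auto intro!: TT_closed_coord)
    finally show ?thesis .
  qed
  have eq: "{x. restrict x J \<in> X} = \<Union>((\<lambda>u. {x. \<forall>j\<in>J. x j = u j}) ` (X \<inter> PiE J (\<lambda>_. UNIV)))"
  proof -
    have "restrict x J \<in> X \<longleftrightarrow> (\<exists>u\<in>X \<inter> PiE J (\<lambda>_. UNIV). \<forall>j\<in>J. x j = u j)" for x
    proof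
      assume "restrict x J \<in> X" then show "\<exists>u\<in>X \<inter> PiE J (\<lambda>_. UNIV). \<forall>j\<in>J. x j = u j"
        by (intro bexI[of _ "restrict x J"]) auto
    next
      assume "\<exists>u\<in>X \<inter> PiE J (\<lambda>_. UNIV). \<forall>j\<in>J. x j = u j"
      then obtain u where u: "u \<in> X" "u \<in> PiE J (\<lambda>_. UNIV)" "\<forall>j\<in>J. x j = u j" by blast
      then have "restrict x J = u" by (auto simp: PiE_def extensional_def restrict_def fun_eq_iff)
      then show "restrict x J \<in> X" using u by simp
    qed
    then show ?thesis by blast
  qed
  show ?thesis unfolding eq
    using J by (intro closedin_Union) (auto intro: cu simp: finite_PiE)
qed

lemma nest_nonempty:
  fixes J :: "nat \<Rightarrow> int set" and X :: "nat \<Rightarrow> (int \<Rightarrow> 'a::finite) set"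
  assumes "\<And>n. finite (J n)" "\<And>n. {x. restrict x (J n) \<in> X n} \<noteq> {}"
    "decseq (\<lambda>n. {x. restrict x (J n) \<in> X n})"
  shows "(\<Inter>n. {x. restrict x (J n) \<in> X n}) \<noteq> {}"
  by (rule compact_space_imp_nest[OF TT_compact]) (use assms TT_closed_emb in auto)

lemma extend_exists:
  fixes q :: "int set \<Rightarrow> (int \<Rightarrow> 'a::finite) \<Rightarrow> real"
  assumes q1: "\<And>J w. finite J \<Longrightarrow> q J w \<ge> 0"
    and q2: "\<And>w. q {} w = 1"
    and q3: "\<And>J H w. finite H \<Longrightarrow> J \<subseteq> H \<Longrightarrow>
       q J w = (\<Sum>v\<in>{v\<in>PiE H (\<lambda>_. UNIV). \<forall>i\<in>J. v i = w i}. q H v)"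
  shows "\<exists>M. prob_space M \<and> sets M = sets shift_space \<and>
     (\<forall>J w. finite J \<longrightarrow> measure M (cyl J w) = q J w)"
proof -
  define Mc :: "int \<Rightarrow> 'a measure" where "Mc = (\<lambda>_. count_space UNIV)"
  define P where "P J = point_measure (PiE J (\<lambda>_. UNIV)) (\<lambda>u. ennreal (q J u))" for J
  have PiMc: "PiM J Mc = count_space (PiE J (\<lambda>_. UNIV))" if "finite J" for J
    unfolding Mc_def using that by (intro count_space_PiM_finite) auto
  have setsP: "sets (P J) = sets (PiM J Mc)" if "finite J" for J
    using that by (simp add: P_def PiMc sets_point_measure)
  have emP: "emeasure (P J) X = ennreal (\<Sum>u\<in>X. q J u)" if "finite J" "X \<subseteq> PiE J (\<lambda>_. UNIV)" for J X
  proof -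
    have fX: "finite X" using that finite_subset finite_PiE by (metis finite)
    have "emeasure (P J) X = (\<Sum>u\<in>X. ennreal (q J u))"
      unfolding P_def using that by (intro emeasure_point_measure_finite) (auto simp: finite_PiE)
    also have "\<dots> = ennreal (\<Sum>u\<in>X. q J u)" using q1 that by (intro sum_ennreal) auto
    finally show ?thesis .
  qed
  have qtot: "(\<Sum>u\<in>PiE J (\<lambda>_. UNIV). q J u) = 1" if "finite J" for J
    using q3[OF that, of "{}" undefined] q2 by simp
  have qrestr: "q J w = q J (restrict w J)" if "finite J" for J w
  proof -
    have "{v\<in>PiE J (\<lambda>_. UNIV). \<forall>i\<in>J. v i = w i} = {restrict w J}"
      by (auto simp: PiE_def extensional_def restrict_def fun_eq_iff)
    then show ?thesis using q3[OF that subset_refl, of w] by simp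
  qed
  interpret PF: projective_family UNIV P Mc
  proof (rule projective_family.intro)
    fix J H :: "int set" assume JH: "J \<subseteq> H" "finite H" "H \<subseteq> UNIV"
    have fJ: "finite J" using JH finite_subset by blast
    show "P J = distr (P H) (PiM J Mc) (\<lambda>f. restrict f J)"
    proof (rule measure_eqI)
      show "sets (P J) = sets (distr (P H) (PiM J Mc) (\<lambda>f. restrict f J))"
        using fJ by (simp add: setsP)
      fix X assume X: "X \<in> sets (P J)"
      then have XS: "X \<subseteq> PiE J (\<lambda>_. UNIV)" using fJ by (simp add: setsP PiMc)
      have meas: "(\<lambda>f. restrict f J) \<in> measurable (P H) (PiM J Mc)"
        using JH fJ by (simp add: measurable_cong_sets[OF setsP[OF JH(2)] refl] PiMc)
      have spH: "space (P H) = PiE H (\<lambda>_. UNIV)" by (simp add: P_def space_point_measure)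
      have "emeasure (distr (P H) (PiM J Mc) (\<lambda>f. restrict f J)) X
          = emeasure (P H) ((\<lambda>f. restrict f J) -` X \<inter> space (P H))"
        using X fJ by (intro emeasure_distr meas) (simp add: setsP)
      also have "\<dots> = ennreal (\<Sum>v\<in>{v\<in>PiE H (\<lambda>_. UNIV). restrict v J \<in> X}. q H v)"
        using JH spH by (subst emP) (auto intro!: arg_cong[where f="\<lambda>S. ennreal (sum _ S)"])
      also have "(\<Sum>v\<in>{v\<in>PiE H (\<lambda>_. UNIV). restrict v J \<in> X}. q H v)
          = (\<Sum>u\<in>X. \<Sum>v\<in>{v\<in>{v\<in>PiE H (\<lambda>_. UNIV). restrict v J \<in> X}. restrict v J = u}. q H v)"
        using JH XS fJ by (intro sum.group[symmetric]) (auto simp: finite_PiE intro: finite_subset)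
      also have "\<dots> = (\<Sum>u\<in>X. q J u)"
      proof (rule sum.cong[OF refl])
        fix u assume u: "u \<in> X"
        have "{v\<in>{v\<in>PiE H (\<lambda>_. UNIV). restrict v J \<in> X}. restrict v J = u}
            = {v\<in>PiE H (\<lambda>_. UNIV). \<forall>i\<in>J. v i = u i}"
        proof -
          have ue: "u \<in> extensional J" using u XS by (auto simp: PiE_def)
          have "restrict v J = u \<longleftrightarrow> (\<forall>i\<in>J. v i = u i)" for v
            using ue by (auto simp: restrict_def fun_eq_iff extensional_def)
          then show ?thesis using u by (auto, metis)
        qed
        then show "(\<Sum>v\<in>{v\<in>{v\<in>PiE H (\<lambda>_. UNIV). restrict v J \<in> X}. restrict v J = u}. q H v) = q J u"
          using q3[OF JH(2) JH(1), of u] by simp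
      qed
      finally show "emeasure (P J) X = emeasure (distr (P H) (PiM J Mc) (\<lambda>f. restrict f J)) X"
        using emP[OF fJ XS] by metis
    qed
  next
    fix J :: "int set" assume J: "finite J"
    show "prob_space (P J)"
    proof (rule prob_spaceI)
      have "space (P J) = PiE J (\<lambda>_. UNIV)" by (simp add: P_def space_point_measure)
      then show "emeasure (P J) (space (P J)) = 1" using emP[OF J(1)] qtot[OF J(1)] by simp
    qed
  qed
  have cont: "(\<Inter>i. PF.emb UNIV (J i) (X i)) \<noteq> {}"
    if J: "\<And>i. J i \<subseteq> UNIV" "incseq J" "\<And>i. finite (J i)" and X: "\<And>i. X i \<in> sets (PiM (J i) Mc)"
      and dec: "decseq (\<lambda>i. PF.emb UNIV (J i) (X i))" and pos: "0 < (INF i. P (J i) (X i))"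
    for J :: "nat \<Rightarrow> int set" and X
  proof -
    have embeq: "PF.emb UNIV (J i) (X i) = {x. restrict x (J i) \<in> X i}" for i
      by (auto simp: prod_emb_def Mc_def space_PiM)
    have ne: "{x. restrict x (J i) \<in> X i} \<noteq> {}" for i
    proof -
      have "0 < emeasure (P (J i)) (X i)" using pos by (metis INF_lower UNIV_I order_less_le_trans)
      then have "X i \<noteq> {}" by auto
      then obtain u where u: "u \<in> X i" by blast
      have "X i \<subseteq> PiE (J i) (\<lambda>_. UNIV)" using X[of i] J(3)[of i] sets.sets_into_space[OF X[of i]]
        by (simp add: PiMc)
      then have "restrict u (J i) = u" using u by (auto simp: PiE_def extensional_def restrict_def fun_eq_iff)
      then show ?thesis using u by (metis (mono_tags, lifting) empty_Collect_eq)
    qed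
    show ?thesis unfolding embeq
      by (rule nest_nonempty) (use J(3) ne dec embeq in auto)
  qed
  define L where "L = PF.lim"
  have "sets L = sets (PiM UNIV Mc)" unfolding L_def by (rule PF.sets_lim)
  then have sL: "sets L = sets shift_space" by (simp add: shift_space_def Mc_def)
  have emL: "emeasure L (cyl J w) = ennreal (q J w)" if J: "finite J" for J w
  proof -
    have c: "cyl J w = PF.emb UNIV J {restrict w J}"
      by (auto simp: prod_emb_def Mc_def space_PiM cyl_def restrict_def fun_eq_iff) metis
    have "emeasure L (PF.emb UNIV J {restrict w J}) = emeasure (P J) {restrict w J}"
      unfolding L_def by (rule PF.emeasure_lim) (use J cont PiMc in auto)
    also have "\<dots> = ennreal (q J (restrict w J))" using J by (subst emP) auto
    finally show ?thesis using c qrestr[OF J] by simp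
  qed
  have spL: "space L = UNIV" using sL sets_eq_imp_space_eq by fastforce
  have pL: "prob_space L"
    by (rule prob_spaceI) (use emL[of "{}" undefined] q2 spL in simp)
  show ?thesis
  proof (intro exI conjI allI impI)
    fix J :: "int set" and w assume "finite J"
    then show "measure L (cyl J w) = q J w" using emL q1 by (simp add: measure_def)
  qed (use pL sL in auto)
qed

definition MS :: "(int \<Rightarrow> 'a::finite) measure \<Rightarrow> bool" where
  "MS M \<longleftrightarrow> prob_space M \<and> sets M = sets shift_space"

definition W :: "nat \<Rightarrow> int set" where "W n = {-int n..int n}"

lemma finite_W[simp]: "finite (W n)" by (simp add: W_def)

definition Dn :: "nat \<Rightarrow> (int \<Rightarrow> 'a::finite) measure \<Rightarrow> (int \<Rightarrow> 'a) measure \<Rightarrow> real" where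
  "Dn n \<mu> \<nu> = (\<Sum>u\<in>PiE (W n) (\<lambda>_. UNIV). \<bar>measure \<mu> (cyl (W n) u) - measure \<nu> (cyl (W n) u)\<bar>)"

lemma dM_alt: "dM \<mu> \<nu> = (\<Sum>n. (1/2)^n * (1/2) * Dn n \<mu> \<nu>)"
  by (simp add: dM_def Dn_def W_def)

lemma Dn_nonneg: "Dn n \<mu> \<nu> \<ge> 0" by (simp add: Dn_def sum_nonneg)

lemma Dn_le2:
  assumes "MS \<mu>" "MS \<nu>" shows "Dn n \<mu> \<nu> \<le> 2"
proof -
  have "Dn n \<mu> \<nu> \<le> (\<Sum>u\<in>PiE (W n) (\<lambda>_. UNIV). measure \<mu> (cyl (W n) u) + measure \<nu> (cyl (W n) u))"
    unfolding Dn_def by (intro sum_mono) (auto simp: abs_le_iff)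
  also have "\<dots> = 2" using assms cyl_total[of \<mu> "W n"] cyl_total[of \<nu> "W n"]
    by (simp add: MS_def sum.distrib)
  finally show ?thesis .
qed

lemma Dn_sym: "Dn n \<mu> \<nu> = Dn n \<nu> \<mu>" by (simp add: Dn_def abs_minus_commute)

lemma Dn_tri: "Dn n \<mu> \<rho> \<le> Dn n \<mu> \<nu> + Dn n \<nu> \<rho>"
  unfolding Dn_def sum.distrib[symmetric] by (intro sum_mono) linarith

lemma term_bound:
  assumes "MS \<mu>" "MS \<nu>"
  shows "norm ((1/2::real)^n * (1/2) * Dn n \<mu> \<nu>) \<le> (1/2)^n"
  using Dn_le2[OF assms, of n] Dn_nonneg[of n \<mu> \<nu>] by (simp add: abs_mult)

lemma dM_summable:
  assumes "MS \<mu>" "MS \<nu>"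
  shows "summable (\<lambda>n. (1/2::real)^n * (1/2) * Dn n \<mu> \<nu>)"
proof (rule summable_comparison_test[OF _ summable_geometric[of "1/2::real"]])
  show "\<exists>N. \<forall>n\<ge>N. norm ((1/2::real)^n * (1/2) * Dn n \<mu> \<nu>) \<le> (1/2)^n"
    using term_bound[OF assms] by blast
qed simp

lemma dM_nonneg: assumes "MS \<mu>" "MS \<nu>" shows "0 \<le> dM \<mu> \<nu>"
  unfolding dM_alt by (rule suminf_nonneg[OF dM_summable[OF assms]]) (simp add: Dn_nonneg)

lemma dM_le2: assumes "MS \<mu>" "MS \<nu>" shows "dM \<mu> \<nu> \<le> 2"
proof -
  have "dM \<mu> \<nu> \<le> (\<Sum>n. (1/2::real)^n)"
    unfolding dM_alt
  proof (intro suminf_le dM_summable[OF assms] summable_geometric)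
    fix n show "(1/2::real)^n * (1/2) * Dn n \<mu> \<nu> \<le> (1/2)^n"
    proof -
      have "(1/2::real)^n * (1/2) * Dn n \<mu> \<nu> \<le> (1/2)^n * (1/2) * 2"
        by (intro mult_left_mono Dn_le2 assms) auto
      then show ?thesis by simp
    qed
  qed simp
  also have "\<dots> = 2" using suminf_geometric[of "1/2::real"] by simp
  finally show ?thesis .
qed

lemma dM_self[simp]: "dM \<mu> \<mu> = 0" by (simp add: dM_def)

lemma dM_sym: "dM \<mu> \<nu> = dM \<nu> \<mu>" by (simp add: dM_alt Dn_sym)

lemma dM_tri:
  assumes "MS \<mu>" "MS \<nu>" "MS \<rho>"
  shows "dM \<mu> \<rho> \<le> dM \<mu> \<nu> + dM \<nu> \<rho>"
proof -
  have "dM \<mu> \<nu> + dM \<nu> \<rho> = (\<Sum>n. (1/2::real)^n * (1/2) * Dn n \<mu> \<nu> + (1/2::real)^n * (1/2) * Dn n \<nu> \<rho>)"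
    unfolding dM_alt by (intro suminf_add dM_summable assms)
  moreover have "dM \<mu> \<rho> \<le> (\<Sum>n. (1/2::real)^n * (1/2) * Dn n \<mu> \<nu> + (1/2::real)^n * (1/2) * Dn n \<nu> \<rho>)"
    unfolding dM_alt
  proof (intro suminf_le dM_summable assms summable_add)
    fix n
    have "(1/2::real)^n * (1/2) * Dn n \<mu> \<rho> \<le> (1/2::real)^n * (1/2) * (Dn n \<mu> \<nu> + Dn n \<nu> \<rho>)"
      by (intro mult_left_mono Dn_tri) auto
    then show "(1/2::real)^n * (1/2) * Dn n \<mu> \<rho> \<le> (1/2::real)^n * (1/2) * Dn n \<mu> \<nu> + (1/2::real)^n * (1/2) * Dn n \<nu> \<rho>"
      by (simp add: algebra_simps)
  qed
  ultimately show ?thesis by simp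
qed

lemma Dn_le_dM:
  assumes "MS \<mu>" "MS \<nu>"
  shows "Dn n \<mu> \<nu> \<le> 2 * 2^n * dM \<mu> \<nu>"
proof -
  have "(1/2::real)^n * (1/2) * Dn n \<mu> \<nu> \<le> dM \<mu> \<nu>"
    unfolding dM_alt using sum_le_suminf[OF dM_summable[OF assms], of "{n}"]
    by (simp add: Dn_nonneg)
  then have "2 * 2^n * ((1/2::real)^n * (1/2) * Dn n \<mu> \<nu>) \<le> 2 * 2^n * dM \<mu> \<nu>"
    by (intro mult_left_mono) auto
  then show ?thesis by (simp add: power_divide)
qed

lemma W_cover: "finite J \<Longrightarrow> \<exists>n. J \<subseteq> W n"
proof -
  assume J: "finite J"
  define n where "n = Max (insert 0 ((\<lambda>j. nat \<bar>j\<bar>) ` J))"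
  have "nat \<bar>j\<bar> \<le> n" if "j \<in> J" for j unfolding n_def using J that by (intro Max_ge) auto
  then have "J \<subseteq> W n" by (force simp: W_def)
  then show ?thesis by blast
qed

lemma dM_tendsto_iff:
  fixes \<mu> :: "nat \<Rightarrow> (int \<Rightarrow> 'a::finite) measure"
  assumes ms: "\<And>k. MS (\<mu> k)" and m: "MS m"
  shows "(\<lambda>k. dM (\<mu> k) m) \<longlonglongrightarrow> 0 \<longleftrightarrow>
    (\<forall>J w. finite J \<longrightarrow> (\<lambda>k. measure (\<mu> k) (cyl J w)) \<longlonglongrightarrow> measure m (cyl J w))"
proof
  assume lim: "(\<lambda>k. dM (\<mu> k) m) \<longlonglongrightarrow> 0"
  have cW: "(\<lambda>k. measure (\<mu> k) (cyl (W n) v)) \<longlonglongrightarrow> measure m (cyl (W n) v)"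
    if v: "v \<in> PiE (W n) (\<lambda>_. UNIV)" for n v
  proof -
    have l0: "(\<lambda>k. 2 * 2^n * dM (\<mu> k) m) \<longlonglongrightarrow> 2 * 2^n * 0"
      by (intro tendsto_mult tendsto_const lim)
    have bd: "\<bar>measure (\<mu> k) (cyl (W n) v) - measure m (cyl (W n) v)\<bar> \<le> 2 * 2^n * dM (\<mu> k) m" for k
    proof -
      have "\<bar>measure (\<mu> k) (cyl (W n) v) - measure m (cyl (W n) v)\<bar> \<le> Dn n (\<mu> k) m"
        unfolding Dn_def using v by (intro member_le_sum) (auto simp: finite_PiE)
      also have "\<dots> \<le> 2 * 2^n * dM (\<mu> k) m" by (rule Dn_le_dM[OF ms m])
      finally show ?thesis .
    qed
    have "(\<lambda>k. measure (\<mu> k) (cyl (W n) v) - measure m (cyl (W n) v)) \<longlonglongrightarrow> 0"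
    proof (rule Lim_null_comparison)
      show "\<forall>\<^sub>F k in sequentially. norm (measure (\<mu> k) (cyl (W n) v) - measure m (cyl (W n) v)) \<le> 2 * 2^n * dM (\<mu> k) m"
        using bd by (intro always_eventually allI) simp
      show "(\<lambda>k. 2 * 2^n * dM (\<mu> k) m) \<longlonglongrightarrow> 0" using l0 by simp
    qed
    then show ?thesis by (simp add: LIM_zero_iff)
  qed
  show "\<forall>J w. finite J \<longrightarrow> (\<lambda>k. measure (\<mu> k) (cyl J w)) \<longlonglongrightarrow> measure m (cyl J w)"
  proof (intro allI impI)
    fix J :: "int set" and w :: "int \<Rightarrow> 'a" assume J: "finite J"
    obtain n where n: "J \<subseteq> W n" using W_cover[OF J] by blast
    have "(\<lambda>k. \<Sum>v\<in>{v\<in>PiE (W n) (\<lambda>_. UNIV). \<forall>i\<in>J. v i = w i}. measure (\<mu> k) (cyl (W n) v))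
        \<longlonglongrightarrow> (\<Sum>v\<in>{v\<in>PiE (W n) (\<lambda>_. UNIV). \<forall>i\<in>J. v i = w i}. measure m (cyl (W n) v))"
      by (intro tendsto_sum cW) auto
    then show "(\<lambda>k. measure (\<mu> k) (cyl J w)) \<longlonglongrightarrow> measure m (cyl J w)"
      using cyl_sum[of _ "W n" J w] ms m n by (simp add: MS_def)
  qed
next
  assume conv: "\<forall>J w. finite J \<longrightarrow> (\<lambda>k. measure (\<mu> k) (cyl J w)) \<longlonglongrightarrow> measure m (cyl J w)"
  have D: "(\<lambda>k. (1/2::real)^n * (1/2) * Dn n (\<mu> k) m) \<longlonglongrightarrow> (1/2)^n * (1/2) * 0" for n
  proof -
    have "(\<lambda>k. Dn n (\<mu> k) m) \<longlonglongrightarrow> (\<Sum>u\<in>PiE (W n) (\<lambda>_. UNIV). \<bar>measure m (cyl (W n) u) - measure m (cyl (W n) u)\<bar>)"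
      unfolding Dn_def using conv by (intro tendsto_sum tendsto_rabs tendsto_diff tendsto_const) auto
    then show ?thesis by (intro tendsto_mult tendsto_const) simp
  qed
  have "(\<lambda>k. \<Sum>n. (1/2::real)^n * (1/2) * Dn n (\<mu> k) m) \<longlonglongrightarrow> (\<Sum>n. (1/2::real)^n * (1/2) * 0)"
  proof (rule tannerys_theorem[where M="\<lambda>n. (1/2::real)^n", THEN conjunct2, THEN conjunct2])
    show "\<And>n. (\<lambda>k. (1/2::real)^n * (1/2) * Dn n (\<mu> k) m) \<longlonglongrightarrow> (1/2)^n * (1/2) * 0" by (rule D)
    show "\<forall>\<^sub>F (n, k) in at_top \<times>\<^sub>F sequentially. norm ((1/2::real)^n * (1/2) * Dn n (\<mu> k) m) \<le> (1/2)^n"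
      using term_bound[OF ms m] by (intro always_eventually) auto
    show "summable (\<lambda>n. (1/2::real)^n)" by (rule summable_geometric) simp
  qed simp
  then show "(\<lambda>k. dM (\<mu> k) m) \<longlonglongrightarrow> 0" unfolding dM_alt by simp
qed

lemma SIM_MS: "M \<in> SIM \<Longrightarrow> MS M" by (simp add: SIM_def MS_def)

lemma bounded_subseq_conv:
  fixes f :: "nat \<Rightarrow> real"
  assumes "\<And>n. 0 \<le> f n" "\<And>n. f n \<le> 1"
  shows "\<exists>r. strict_mono r \<and> convergent (f \<circ> r)"
proof -
  obtain r where r: "strict_mono r" "monoseq (\<lambda>n. f (r n))" using seq_monosub by blast
  have "Bseq (\<lambda>n. f (r n))" using assms by (intro BseqI'[where K=1]) auto
  then have "convergent (\<lambda>n. f (r n))" using r by (intro Bseq_monoseq_convergent)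
  then show ?thesis using r by (auto simp: o_def)
qed

lemma MS_space: "MS M \<Longrightarrow> space M = UNIV"
  unfolding MS_def using sets_eq_imp_space_eq[of M shift_space] by simp

lemma MS_UNIV: "MS M \<Longrightarrow> measure M UNIV = 1"
  using MS_space[of M] prob_space.prob_space[of M] by (simp add: MS_def)

lemma cyl_sum_MS: "MS M \<Longrightarrow> finite H \<Longrightarrow> J \<subseteq> H \<Longrightarrow>
  measure M (cyl J w) = (\<Sum>v\<in>{v\<in>PiE H (\<lambda>_. UNIV). \<forall>i\<in>J. v i = w i}. measure M (cyl H v))"
  unfolding MS_def by (intro cyl_sum) auto

lemma measure_le1: "MS M \<Longrightarrow> measure M A \<le> 1"
  by (simp add: MS_def prob_space.prob_le_1)

lemma seq_compact_SIM:
  fixes \<mu> :: "nat \<Rightarrow> (int \<Rightarrow> 'a::finite) measure"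
  assumes S: "\<And>k. \<mu> k \<in> SIM"
  shows "\<exists>r m. strict_mono r \<and> m \<in> SIM \<and> (\<lambda>k. dM (\<mu> (r k)) m) \<longlonglongrightarrow> 0"
proof -
  have ms: "MS (\<mu> k)" for k using S SIM_MS by blast
  define C :: "(int set \<times> (int \<Rightarrow> 'a)) set" where "C = (SIGMA J:{J. finite J}. PiE J (\<lambda>_. UNIV))"
  have cC: "countable C" unfolding C_def
    by (intro countable_SIGMA countable_Collect_finite countable_finite) (auto simp: finite_PiE)
  have "({}, \<lambda>_. undefined) \<in> C" by (simp add: C_def)
  then have neC: "C \<noteq> {}" by blast
  define idx where "idx = from_nat_into C"
  have ridx: "range idx = C" unfolding idx_def using cC neC by simp
  define val where "val k j = measure (\<mu> k) (cyl (fst (idx j)) (snd (idx j)))" for k j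
  interpret subseqs "\<lambda>j s. convergent (\<lambda>k. val (s k) j)"
  proof
    fix j and s :: "nat \<Rightarrow> nat" assume "strict_mono s"
    obtain r where "strict_mono r" "convergent ((\<lambda>k. val (s k) j) \<circ> r)"
      using bounded_subseq_conv[of "\<lambda>k. val (s k) j"] ms measure_le1
      by (auto simp: val_def)
    then show "\<exists>r'. strict_mono r' \<and> convergent (\<lambda>k. val ((s \<circ> r') k) j)"
      by (auto simp: o_def)
  qed
  define r where "r = diagseq"
  have r: "strict_mono r" unfolding r_def by (rule subseq_diagseq)
  have convj: "convergent (\<lambda>k. val (r k) j)" for j
  proof -
    have "convergent (\<lambda>k. val ((diagseq \<circ> (+) (Suc j)) k) j)"
      by (rule diagseq_holds) (auto dest: convergent_subseq_convergent simp: o_def)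
    then obtain l where "(\<lambda>k. val (diagseq (Suc j + k)) j) \<longlonglongrightarrow> l" by (auto simp: convergent_def)
    then have "(\<lambda>k. val (diagseq (k + Suc j)) j) \<longlonglongrightarrow> l" by (simp add: add.commute)
    then have "(\<lambda>k. val (diagseq k) j) \<longlonglongrightarrow> l" by (rule LIMSEQ_offset)
    then show ?thesis by (auto simp: convergent_def r_def)
  qed
  have conv: "convergent (\<lambda>k. measure (\<mu> (r k)) (cyl J w))" if J: "finite J" for J w
  proof -
    have "(J, restrict w J) \<in> C" using J by (auto simp: C_def)
    then obtain j where j: "idx j = (J, restrict w J)" using ridx by (metis rangeE)
    have "cyl J (restrict w J) = cyl J w" by (auto simp: cyl_def)
    then show ?thesis using convj[of j] j by (simp add: val_def)
  qed
  define q where "q J w = lim (\<lambda>k. measure (\<mu> (r k)) (cyl J w))" for J w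
  have qlim: "(\<lambda>k. measure (\<mu> (r k)) (cyl J w)) \<longlonglongrightarrow> q J w" if "finite J" for J w
    using conv[OF that] by (simp add: q_def convergent_LIMSEQ_iff)
  obtain m where m: "prob_space m" "sets m = sets shift_space"
    "\<And>J w. finite J \<Longrightarrow> measure m (cyl J w) = q J w"
  proof (atomize_elim, rule extend_exists)
    fix J :: "int set" and w assume J: "finite J"
    show "0 \<le> q J w"
      by (rule LIMSEQ_le_const[OF qlim[OF J]]) simp
  next
    fix w :: "int \<Rightarrow> 'a"
    have "(\<lambda>k. measure (\<mu> (r k)) (cyl {} w)) \<longlonglongrightarrow> 1"
      by (simp add: MS_UNIV[OF ms])
    then show "q {} w = 1" using LIMSEQ_unique[OF qlim[of "{}" w]] by simp
  next
    fix J H :: "int set" and w assume H: "finite H" and JH: "J \<subseteq> H"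
    have J: "finite J" using H JH finite_subset by blast
    have "(\<lambda>k. \<Sum>v\<in>{v\<in>PiE H (\<lambda>_. UNIV). \<forall>i\<in>J. v i = w i}. measure (\<mu> (r k)) (cyl H v))
       \<longlonglongrightarrow> (\<Sum>v\<in>{v\<in>PiE H (\<lambda>_. UNIV). \<forall>i\<in>J. v i = w i}. q H v)"
      by (intro tendsto_sum qlim H)
    moreover have "(\<lambda>k. \<Sum>v\<in>{v\<in>PiE H (\<lambda>_. UNIV). \<forall>i\<in>J. v i = w i}. measure (\<mu> (r k)) (cyl H v))
        = (\<lambda>k. measure (\<mu> (r k)) (cyl J w))"
      by (intro ext) (rule cyl_sum_MS[OF ms H JH, symmetric])
    ultimately have "(\<lambda>k. measure (\<mu> (r k)) (cyl J w)) \<longlonglongrightarrow> (\<Sum>v\<in>{v\<in>PiE H (\<lambda>_. UNIV). \<forall>i\<in>J. v i = w i}. q H v)"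
      by simp
    then show "q J w = (\<Sum>v\<in>{v\<in>PiE H (\<lambda>_. UNIV). \<forall>i\<in>J. v i = w i}. q H v)"
      by (rule LIMSEQ_unique[OF qlim[OF J, of w]])
  qed
  have mMS: "MS m" using m by (simp add: MS_def)
  have dlim: "(\<lambda>k. dM (\<mu> (r k)) m) \<longlonglongrightarrow> 0"
  proof -
    have "\<forall>J w. finite J \<longrightarrow> (\<lambda>k. measure (\<mu> (r k)) (cyl J w)) \<longlonglongrightarrow> measure m (cyl J w)"
      using qlim m(3) by simp
    then show ?thesis using dM_tendsto_iff[of "\<lambda>k. \<mu> (r k)" m, OF ms mMS] by blast
  qed
  have "m \<in> SIM"
  proof (subst SIM_iff[OF m(1,2)], intro allI impI)
    fix J :: "int set" and w :: "int \<Rightarrow> 'a" assume J: "finite J"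
    have J1: "finite ((\<lambda>i. i+1) ` J)" using J by simp
    have "\<And>k. measure (\<mu> (r k)) (cyl ((\<lambda>i. i+1) ` J) (\<lambda>i. w (i - 1))) = measure (\<mu> (r k)) (cyl J w)"
      using S SIM_iff[of "\<mu> (r k)" for k] ms[unfolded MS_def] J by blast
    then have "(\<lambda>k. measure (\<mu> (r k)) (cyl J w)) \<longlonglongrightarrow> q ((\<lambda>i. i+1) ` J) (\<lambda>i. w (i - 1))"
      using qlim[OF J1, of "\<lambda>i. w (i - 1)"] by simp
    then have "q ((\<lambda>i. i+1) ` J) (\<lambda>i. w (i - 1)) = q J w"
      by (rule LIMSEQ_unique[OF _ qlim[OF J, of w]])
    then show "measure m (cyl ((\<lambda>i. i+1) ` J) (\<lambda>i. w (i - 1))) = measure m (cyl J w)"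
      using m(3) J J1 by simp
  qed
  then show ?thesis using r dlim by blast
qed

definition stoch :: "int set \<Rightarrow> ((int \<Rightarrow> 'a::finite) \<Rightarrow> 'a \<Rightarrow> real) \<Rightarrow> bool" where
  "stoch N fe \<longleftrightarrow> finite N \<and> (\<forall>u\<in>extensional N. (\<forall>b. fe u b \<ge> 0) \<and> (\<Sum>b\<in>UNIV. fe u b) = 1)"

definition Gp :: "int set \<Rightarrow> ((int \<Rightarrow> 'a::finite) \<Rightarrow> 'a \<Rightarrow> real) \<Rightarrow> int set \<Rightarrow> (int \<Rightarrow> 'a) \<Rightarrow> (int \<Rightarrow> 'a) \<Rightarrow> real" where
  "Gp N fe U w x = (\<Prod>i\<in>U. fe (pat x i N) (w i))"

definition dep :: "int set \<Rightarrow> int set \<Rightarrow> int set" where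
  "dep N U = (\<Union>i\<in>U. (\<lambda>j. i + j) ` N)"

lemma finite_dep: "finite N \<Longrightarrow> finite U \<Longrightarrow> finite (dep N U)"
  by (simp add: dep_def)

lemma pat_ext: "pat x i N \<in> extensional N" by (simp add: pat_def)

lemma fe_nonneg: "stoch N fe \<Longrightarrow> 0 \<le> fe (pat x i N) b"
  using pat_ext[of x i N] by (auto simp: stoch_def)

lemma fe_le1: "stoch N fe \<Longrightarrow> fe (pat x i N) b \<le> 1"
proof -
  assume s: "stoch N fe"
  have "fe (pat x i N) b \<le> (\<Sum>b\<in>UNIV. fe (pat x i N) b)"
    using fe_nonneg[OF s] by (intro member_le_sum) auto
  also have "\<dots> = 1" using s pat_ext by (auto simp: stoch_def)
  finally show ?thesis .
qed

lemma Gp_nonneg: "stoch N fe \<Longrightarrow> 0 \<le> Gp N fe U w x"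
  unfolding Gp_def by (intro prod_nonneg) (auto intro: fe_nonneg)

lemma Gp_le1: "stoch N fe \<Longrightarrow> Gp N fe U w x \<le> 1"
  unfolding Gp_def by (intro prod_le_1) (auto intro: fe_nonneg fe_le1)

lemma Gp_dep:
  assumes "dep N U \<subseteq> K" "restrict x K = restrict y K"
  shows "Gp N fe U w x = Gp N fe U w y"
proof -
  have "pat x i N = pat y i N" if "i \<in> U" for i
  proof -
    have "x (i + j) = y (i + j)" if "j \<in> N" for j
    proof -
      have "i + j \<in> K" using assms(1) \<open>i \<in> U\<close> that by (auto simp: dep_def)
      then show ?thesis using assms(2) by (metis restrict_apply')
    qed
    then show ?thesis by (auto simp: pat_def restrict_def fun_eq_iff)
  qed
  then show ?thesis by (simp add: Gp_def)
qed

lemma Gp_consistent: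
  assumes s: "stoch N fe" and H: "finite H" and JH: "J \<subseteq> H"
  shows "(\<Sum>v\<in>{v\<in>PiE H (\<lambda>_. UNIV). \<forall>i\<in>J. v i = w i}. Gp N fe H v x) = Gp N fe J w x"
proof -
  define B where "B i = (if i \<in> J then {w i} else UNIV)" for i
  have eqS: "{v\<in>PiE H (\<lambda>_. UNIV). \<forall>i\<in>J. v i = w i} = PiE H B"
    using JH by (auto simp: B_def PiE_def Pi_def split: if_splits)
  have "(\<Sum>v\<in>PiE H B. \<Prod>i\<in>H. fe (pat x i N) (v i)) = (\<Prod>i\<in>H. \<Sum>b\<in>B i. fe (pat x i N) b)"
    using H by (intro prod_sum_PiE[symmetric]) (auto simp: B_def)
  also have "\<dots> = (\<Prod>i\<in>H. if i \<in> J then fe (pat x i N) (w i) else 1)"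
    using s pat_ext by (intro prod.cong) (auto simp: B_def stoch_def)
  also have "\<dots> = (\<Prod>i\<in>J. fe (pat x i N) (w i))"
    using H JH by (simp add: prod.If_cases Int_absorb1)
  finally show ?thesis by (simp add: eqS Gp_def)
qed

lemma pat_shift: "pat x (i + 1) N = pat (shift_map x) i N"
  by (auto simp: pat_def shift_map_def restrict_def fun_eq_iff ac_simps)

lemma Gp_shift: "Gp N fe ((\<lambda>i. i+1) ` U) (\<lambda>i. w (i - 1)) x = Gp N fe U w (shift_map x)"
proof -
  have "Gp N fe ((\<lambda>i. i+1) ` U) (\<lambda>i. w (i - 1)) x = (\<Prod>i\<in>U. fe (pat x (i+1) N) (w i))"
    unfolding Gp_def by (subst prod.reindex) (auto simp: inj_on_def)
  then show ?thesis by (simp add: pat_shift Gp_def)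
qed

lemma extend_SIM:
  fixes q :: "int set \<Rightarrow> (int \<Rightarrow> 'a::finite) \<Rightarrow> real"
  assumes q1: "\<And>J w. finite J \<Longrightarrow> q J w \<ge> 0"
    and q2: "\<And>w. q {} w = 1"
    and q3: "\<And>J H w. finite H \<Longrightarrow> J \<subseteq> H \<Longrightarrow>
       q J w = (\<Sum>v\<in>{v\<in>PiE H (\<lambda>_. UNIV). \<forall>i\<in>J. v i = w i}. q H v)"
    and q4: "\<And>J w. finite J \<Longrightarrow> q ((\<lambda>i. i+1) ` J) (\<lambda>i. w (i - 1)) = q J w"
  shows "\<exists>M\<in>SIM. \<forall>J w. finite J \<longrightarrow> measure M (cyl J w) = q J w"
proof -
  obtain M where M: "prob_space M" "sets M = sets shift_space"
    "\<And>J w. finite J \<Longrightarrow> measure M (cyl J w) = q J w"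
    using extend_exists[of q, OF q1 q2 q3] by blast
  have "M \<in> SIM" using M q4 by (subst SIM_iff) auto
  then show ?thesis using M by blast
qed

lemma Gp_integral:
  assumes s: "stoch N fe" and ms: "MS \<nu>" and U: "finite U" and K: "finite K" "dep N U \<subseteq> K"
  shows "integrable \<nu> (Gp N fe U w)" "Gp N fe U w \<in> borel_measurable \<nu>"
    "integral\<^sup>L \<nu> (Gp N fe U w) = (\<Sum>v\<in>PiE K (\<lambda>_. UNIV). Gp N fe U w v * measure \<nu> (cyl K v))"
proof -
  have P: "prob_space \<nu>" and S: "sets \<nu> = sets shift_space" using ms by (auto simp: MS_def)
  have g: "\<And>x y. restrict x K = restrict y K \<Longrightarrow> Gp N fe U w x = Gp N fe U w y"
    by (rule Gp_dep[OF K(2)])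
  show "integrable \<nu> (Gp N fe U w)" by (rule cylfun(2)[OF P S K(1) g])
  show "Gp N fe U w \<in> borel_measurable \<nu>" by (rule cylfun(1)[OF P S K(1) g])
  show "integral\<^sup>L \<nu> (Gp N fe U w) = (\<Sum>v\<in>PiE K (\<lambda>_. UNIV). Gp N fe U w v * measure \<nu> (cyl K v))"
    by (rule cylfun(3)[OF P S K(1) g])
qed

lemma Gp_empty[simp]: "Gp N fe {} w x = 1" by (simp add: Gp_def)

lemma dep_mono_cover: "finite N \<Longrightarrow> finite U \<Longrightarrow> \<exists>K. finite K \<and> dep N U \<subseteq> K"
  using finite_dep by blast

lemma Fop_ex:
  fixes \<nu> :: "(int \<Rightarrow> 'a::finite) measure"
  assumes s: "stoch N fe" and S: "\<nu> \<in> SIM"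
  shows "\<exists>\<nu>'\<in>SIM. \<forall>J w. finite J \<longrightarrow> measure \<nu>' (cyl J w) = integral\<^sup>L \<nu> (Gp N fe J w)"
proof -
  have ms: "MS \<nu>" using S by (rule SIM_MS)
  have fN: "finite N" using s by (simp add: stoch_def)
  have sets: "sets \<nu> = sets shift_space" using ms by (simp add: MS_def)
  have int: "integrable \<nu> (Gp N fe U w)" if "finite U" for U w
    using Gp_integral(1)[OF s ms that finite_dep[OF fN that] subset_refl] .
  have bm: "Gp N fe U w \<in> borel_measurable shift_space" if "finite U" for U w
    using Gp_integral(2)[OF s ms that finite_dep[OF fN that] subset_refl]
    unfolding measurable_cong_sets[OF sets refl] .
  show ?thesis
  proof (rule extend_SIM)
    fix J :: "int set" and w :: "int \<Rightarrow> 'a" assume "finite J"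
    show "0 \<le> integral\<^sup>L \<nu> (Gp N fe J w)" by (intro integral_nonneg_AE AE_I2 Gp_nonneg s)
  next
    fix w :: "int \<Rightarrow> 'a"
    show "integral\<^sup>L \<nu> (Gp N fe {} w) = 1"
    proof -
      have "measure \<nu> (space \<nu>) = 1" using ms unfolding MS_def by (intro prob_space.prob_space) blast
      then show ?thesis unfolding Gp_empty by simp
    qed
  next
    fix J H :: "int set" and w :: "int \<Rightarrow> 'a" assume H: "finite H" and JH: "J \<subseteq> H"
    have "integral\<^sup>L \<nu> (Gp N fe J w) = integral\<^sup>L \<nu> (\<lambda>x. \<Sum>v\<in>{v\<in>PiE H (\<lambda>_. UNIV). \<forall>i\<in>J. v i = w i}. Gp N fe H v x)"
      by (simp only: Gp_consistent[OF s H JH])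
    also have "\<dots> = (\<Sum>v\<in>{v\<in>PiE H (\<lambda>_. UNIV). \<forall>i\<in>J. v i = w i}. integral\<^sup>L \<nu> (Gp N fe H v))"
      by (rule Bochner_Integration.integral_sum) (rule int[OF H])
    finally show "integral\<^sup>L \<nu> (Gp N fe J w) = (\<Sum>v\<in>{v\<in>PiE H (\<lambda>_. UNIV). \<forall>i\<in>J. v i = w i}. integral\<^sup>L \<nu> (Gp N fe H v))" .
  next
    fix J :: "int set" and w :: "int \<Rightarrow> 'a" assume J: "finite J"
    have sm: "shift_map \<in> measurable \<nu> shift_space"
      unfolding measurable_cong_sets[OF sets refl] by (rule shift_meas)
    have "integral\<^sup>L \<nu> (Gp N fe ((\<lambda>i. i+1) ` J) (\<lambda>i. w (i - 1))) = integral\<^sup>L \<nu> (\<lambda>x. Gp N fe J w (shift_map x))"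
    proof -
      have "Gp N fe ((\<lambda>i. i+1) ` J) (\<lambda>i. w (i - 1)) = (\<lambda>x. Gp N fe J w (shift_map x))"
        by (rule ext) (rule Gp_shift)
      then show ?thesis by (simp only:)
    qed
    also have "\<dots> = integral\<^sup>L (distr \<nu> shift_space shift_map) (Gp N fe J w)"
      by (rule integral_distr[symmetric, OF sm bm[OF J]])
    also have "distr \<nu> shift_space shift_map = \<nu>" using S unfolding SIM_def by blast
    finally show "integral\<^sup>L \<nu> (Gp N fe ((\<lambda>i. i+1) ` J) (\<lambda>i. w (i - 1))) = integral\<^sup>L \<nu> (Gp N fe J w)" .
  qed
qed

lemma return_SIM: "return shift_space (\<lambda>_. c) \<in> SIM"
proof -
  have "distr (return shift_space (\<lambda>_. c)) shift_space shift_map = return shift_space (shift_map (\<lambda>_. c))"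
    by (rule distr_return[OF shift_meas]) simp
  also have "shift_map (\<lambda>_. c) = (\<lambda>_. c)" by (simp add: shift_map_def)
  finally show ?thesis
    unfolding SIM_def by (auto intro!: prob_space_return)
qed

lemma MS_measure_nonneg: "measure M A \<ge> 0" by simp

lemma fixed_point_exists:
  fixes N :: "int set" and fe :: "(int \<Rightarrow> 'a::finite) \<Rightarrow> 'a \<Rightarrow> real"
  assumes s: "stoch N fe"
  shows "\<exists>\<mu>\<in>SIM. \<forall>U w. finite U \<longrightarrow> measure \<mu> (cyl U w) = integral\<^sup>L \<mu> (Gp N fe U w)"
proof -
  have fN: "finite N" using s unfolding stoch_def by blast
  define P where "P \<nu> \<nu>' \<longleftrightarrow> \<nu>' \<in> SIM \<and> (\<forall>J w. finite J \<longrightarrow> measure \<nu>' (cyl J w) = integral\<^sup>L \<nu> (Gp N fe J w))"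
    for \<nu> \<nu>' :: "(int \<Rightarrow> 'a) measure"
  define nxt where "nxt \<nu> = (SOME \<nu>'. P \<nu> \<nu>')" for \<nu>
  have nxt: "P \<nu> (nxt \<nu>)" if S: "\<nu> \<in> SIM" for \<nu>
  proof -
    obtain \<nu>' where "\<nu>' \<in> SIM" "\<forall>J w. finite J \<longrightarrow> measure \<nu>' (cyl J w) = integral\<^sup>L \<nu> (Gp N fe J w)"
      using Fop_ex[OF s S] by blast
    then have "P \<nu> \<nu>'" unfolding P_def by blast
    then show ?thesis unfolding nxt_def by (rule someI)
  qed
  define nu where "nu k = (nxt ^^ k) (return shift_space (\<lambda>_. undefined))" for k
  have nuS: "nu k \<in> SIM" for k
  proof (induction k)
    case 0 then show ?case by (simp add: nu_def return_SIM)
  next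
    case (Suc k) then show ?case using nxt[of "nu k"] by (simp add: nu_def P_def)
  qed
  have nuMS: "MS (nu k)" for k using nuS by (rule SIM_MS)
  have step: "measure (nu (Suc k)) (cyl J w) = integral\<^sup>L (nu k) (Gp N fe J w)" if "finite J" for k J w
    using nxt[OF nuS[of k]] that by (simp add: nu_def P_def)
  define q where "q n J w = (\<Sum>k\<le>n. measure (nu k) (cyl J w)) / real (Suc n)" for n J w
  have "\<exists>M\<in>SIM. \<forall>J w. finite J \<longrightarrow> measure M (cyl J w) = q n J w" for n
  proof (rule extend_SIM)
    fix J :: "int set" and w :: "int \<Rightarrow> 'a"
    show "0 \<le> q n J w" unfolding q_def by (intro divide_nonneg_nonneg sum_nonneg) auto
  next
    fix w :: "int \<Rightarrow> 'a"
    have "(\<Sum>k\<le>n. measure (nu k) (cyl {} w)) = (\<Sum>k\<le>n. 1)"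
      using MS_UNIV[OF nuMS] by simp
    then show "q n {} w = 1" unfolding q_def by simp
  next
    fix J H :: "int set" and w :: "int \<Rightarrow> 'a" assume H: "finite H" and JH: "J \<subseteq> H"
    have "(\<Sum>k\<le>n. measure (nu k) (cyl J w))
        = (\<Sum>k\<le>n. \<Sum>v\<in>{v\<in>PiE H (\<lambda>_. UNIV). \<forall>i\<in>J. v i = w i}. measure (nu k) (cyl H v))"
      by (intro sum.cong refl cyl_sum_MS[OF nuMS H JH])
    also have "\<dots> = (\<Sum>v\<in>{v\<in>PiE H (\<lambda>_. UNIV). \<forall>i\<in>J. v i = w i}. \<Sum>k\<le>n. measure (nu k) (cyl H v))"
      by (rule sum.swap)
    finally show "q n J w = (\<Sum>v\<in>{v\<in>PiE H (\<lambda>_. UNIV). \<forall>i\<in>J. v i = w i}. q n H v)"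
      unfolding q_def by (simp add: sum_divide_distrib)
  next
    fix J :: "int set" and w :: "int \<Rightarrow> 'a" assume J: "finite J"
    have "measure (nu k) (cyl ((\<lambda>i. i+1) ` J) (\<lambda>i. w (i - 1))) = measure (nu k) (cyl J w)" for k
      using nuS[of k] nuMS[of k] J unfolding MS_def by (subst (asm) SIM_iff) auto
    then show "q n ((\<lambda>i. i+1) ` J) (\<lambda>i. w (i - 1)) = q n J w" unfolding q_def by simp
  qed
  then obtain a where a: "\<And>n. a n \<in> SIM" "\<And>n J w. finite J \<Longrightarrow> measure (a n) (cyl J w) = q n J w"
    by metis
  have aMS: "MS (a n)" for n using a(1) by (rule SIM_MS)
  obtain r \<mu> where r: "strict_mono r" and \<mu>: "\<mu> \<in> SIM" and lim: "(\<lambda>k. dM (a (r k)) \<mu>) \<longlonglongrightarrow> 0"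
    using seq_compact_SIM[of a, OF a(1)] by blast
  have \<mu>MS: "MS \<mu>" using \<mu> by (rule SIM_MS)
  have cconv: "(\<lambda>k. measure (a (r k)) (cyl J w)) \<longlonglongrightarrow> measure \<mu> (cyl J w)" if "finite J" for J w
    using dM_tendsto_iff[of "\<lambda>k. a (r k)" \<mu>, OF aMS \<mu>MS] lim that by blast
  have "\<forall>U w. finite U \<longrightarrow> measure \<mu> (cyl U w) = integral\<^sup>L \<mu> (Gp N fe U w)"
  proof (intro allI impI)
    fix U :: "int set" and w :: "int \<Rightarrow> 'a" assume U: "finite U"
    define K where "K = dep N U"
    have K: "finite K" "dep N U \<subseteq> K" using finite_dep[OF fN U] by (auto simp: K_def)
    define D where "D n = measure (a n) (cyl U w) - integral\<^sup>L (a n) (Gp N fe U w)" for n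
    have Dbound: "\<bar>D n\<bar> \<le> 1 / real (Suc n)" for n
    proof -
      have "integral\<^sup>L (a n) (Gp N fe U w) = (\<Sum>v\<in>PiE K (\<lambda>_. UNIV). Gp N fe U w v * q n K v)"
        using Gp_integral(3)[OF s aMS U K] a(2)[OF K(1)] by simp
      also have "\<dots> = (\<Sum>k\<le>n. \<Sum>v\<in>PiE K (\<lambda>_. UNIV). Gp N fe U w v * measure (nu k) (cyl K v)) / real (Suc n)"
        unfolding q_def by (simp add: sum_divide_distrib sum_distrib_left sum.swap[of _ "PiE K _"])
      also have "\<dots> = (\<Sum>k\<le>n. integral\<^sup>L (nu k) (Gp N fe U w)) / real (Suc n)"
        using Gp_integral(3)[OF s nuMS U K] by simp
      also have "\<dots> = (\<Sum>k\<le>n. measure (nu (Suc k)) (cyl U w)) / real (Suc n)"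
        using step[OF U] by simp
      finally have i: "integral\<^sup>L (a n) (Gp N fe U w) = (\<Sum>k\<le>n. measure (nu (Suc k)) (cyl U w)) / real (Suc n)" .
      have "D n = (\<Sum>k\<le>n. measure (nu k) (cyl U w) - measure (nu (Suc k)) (cyl U w)) / real (Suc n)"
        unfolding D_def i a(2)[OF U] q_def by (simp add: sum_subtractf diff_divide_distrib)
      also have "\<dots> = (measure (nu 0) (cyl U w) - measure (nu (Suc n)) (cyl U w)) / real (Suc n)"
        using sum_telescope[of "\<lambda>k. measure (nu k) (cyl U w)" n] by simp
      finally have Dn: "D n = (measure (nu 0) (cyl U w) - measure (nu (Suc n)) (cyl U w)) / real (Suc n)" .
      have "\<bar>measure (nu 0) (cyl U w) - measure (nu (Suc n)) (cyl U w)\<bar> \<le> 1"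
        using measure_le1[OF nuMS, of 0 "cyl U w"] measure_le1[OF nuMS, of "Suc n" "cyl U w"]
          measure_nonneg[of "nu 0" "cyl U w"] measure_nonneg[of "nu (Suc n)" "cyl U w"] unfolding abs_le_iff by linarith
      then show ?thesis unfolding Dn by (simp add: divide_right_mono)
    qed
    have D0: "(\<lambda>k. D (r k)) \<longlonglongrightarrow> 0"
    proof (rule Lim_null_comparison)
      show "\<forall>\<^sub>F k in sequentially. norm (D (r k)) \<le> 1 / real (Suc k)"
      proof (intro always_eventually allI)
        fix k
        have "real (Suc k) \<le> real (Suc (r k))" using seq_suble[OF r, of k] by simp
        then have "1 / real (Suc (r k)) \<le> 1 / real (Suc k)" by (intro divide_left_mono) auto
        then show "norm (D (r k)) \<le> 1 / real (Suc k)" using Dbound[of "r k"] by simp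
      qed
      show "(\<lambda>k. 1 / real (Suc k)) \<longlonglongrightarrow> 0" by (rule LIMSEQ_Suc[OF lim_const_over_n])
    qed
    have DL: "(\<lambda>k. D (r k)) \<longlonglongrightarrow> measure \<mu> (cyl U w) - integral\<^sup>L \<mu> (Gp N fe U w)"
    proof -
      have "(\<lambda>k. \<Sum>v\<in>PiE K (\<lambda>_. UNIV). Gp N fe U w v * measure (a (r k)) (cyl K v))
          \<longlonglongrightarrow> (\<Sum>v\<in>PiE K (\<lambda>_. UNIV). Gp N fe U w v * measure \<mu> (cyl K v))"
        by (intro tendsto_sum tendsto_mult tendsto_const cconv K(1))
      then have "(\<lambda>k. integral\<^sup>L (a (r k)) (Gp N fe U w)) \<longlonglongrightarrow> integral\<^sup>L \<mu> (Gp N fe U w)"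
        using Gp_integral(3)[OF s aMS U K] Gp_integral(3)[OF s \<mu>MS U K] by simp
      then show ?thesis unfolding D_def by (intro tendsto_diff cconv U)
    qed
    have "measure \<mu> (cyl U w) - integral\<^sup>L \<mu> (Gp N fe U w) = 0"
      by (rule LIMSEQ_unique[OF DL D0])
    then show "measure \<mu> (cyl U w) = integral\<^sup>L \<mu> (Gp N fe U w)" by simp
  qed
  then show ?thesis using \<mu> by blast
qed

lemma diam_facts:
  fixes K :: "(int \<Rightarrow> 'a::finite) measure set"
  assumes K: "K \<subseteq> SIM" "K \<noteq> {}"
  shows "\<And>\<mu> \<nu>. \<mu> \<in> K \<Longrightarrow> \<nu> \<in> K \<Longrightarrow> dM \<mu> \<nu> \<le> diamM K"
    and "0 \<le> diamM K"
    and "\<And>\<delta>. \<delta> < diamM K \<Longrightarrow> \<exists>\<mu>\<in>K. \<exists>\<nu>\<in>K. \<delta> < dM \<mu> \<nu>"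
proof -
  define X where "X = {dM \<mu> \<nu> | \<mu> \<nu>. \<mu> \<in> K \<and> \<nu> \<in> K}"
  have bdd: "bdd_above X" unfolding X_def bdd_above_def
    using K(1) dM_le2 SIM_MS by blast
  have neX: "X \<noteq> {}" using K(2) unfolding X_def by blast
  have d: "diamM K = Sup X" by (simp add: diamM_def X_def)
  show le: "dM \<mu> \<nu> \<le> diamM K" if "\<mu> \<in> K" "\<nu> \<in> K" for \<mu> \<nu>
    unfolding d by (rule cSup_upper[OF _ bdd]) (use that X_def in blast)
  obtain \<mu> where "\<mu> \<in> K" using K(2) by blast
  then show "0 \<le> diamM K" using le[of \<mu> \<mu>] by simp
  show "\<exists>\<mu>\<in>K. \<exists>\<nu>\<in>K. \<delta> < dM \<mu> \<nu>" if "\<delta> < diamM K" for \<delta>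
  proof -
    have "\<exists>x\<in>X. \<delta> < x" using that unfolding d by (simp add: less_cSup_iff[OF neX bdd])
    then show ?thesis unfolding X_def by blast
  qed
qed

lemma Gp_fun: "Gp N fe U w = (\<lambda>x. \<Prod>i\<in>U. fe (pat x i N) (w i))"
  by (rule ext) (simp add: Gp_def)

lemma Meps_char: "Meps N feps eps = {\<mu>\<in>SIM. \<forall>U w. finite U \<longrightarrow> measure \<mu> (cyl U w) = integral\<^sup>L \<mu> (Gp N (feps eps) U w)}"
  unfolding Meps_def Gp_fun ..

lemma perturbation_stoch: "perturbation N f feps \<Longrightarrow> eps > 0 \<Longrightarrow> stoch N (feps eps)"
  unfolding perturbation_def stoch_def by blast

lemma Meps_nonempty: "perturbation N f feps \<Longrightarrow> eps > 0 \<Longrightarrow> Meps N feps eps \<noteq> {}"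
  using fixed_point_exists[OF perturbation_stoch] unfolding Meps_char by blast

lemma MlimI:
  assumes "\<mu> \<in> SIM" "\<And>n. e n > 0" "e \<longlonglongrightarrow> 0" "\<And>n. m n \<in> Meps N feps (e n)" "(\<lambda>n. dM (m n) \<mu>) \<longlonglongrightarrow> 0"
  shows "\<mu> \<in> Mlim N feps"
  unfolding Mlim_def using assms by blast

lemma acc_ptsI:
  assumes "\<mu> \<in> SIM" "\<And>n. e n > 0" "e \<longlonglongrightarrow> 0" "(\<lambda>n. dM (\<pi> (e n)) \<mu>) \<longlonglongrightarrow> 0"
  shows "\<mu> \<in> acc_pts \<pi>"
  unfolding acc_pts_def using assms by blast

lemma Meps_SIM: "Meps N feps eps \<subseteq> SIM"
  unfolding Meps_def by blast

theorem mainTheorem10: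
  fixes N :: "int set" and f :: "(int \<Rightarrow> 'a::finite) \<Rightarrow> 'a"
    and feps :: "real \<Rightarrow> (int \<Rightarrow> 'a) \<Rightarrow> 'a \<Rightarrow> real"
  assumes "perturbation N f feps"
  shows "((\<forall>eps>0. \<exists>\<mu>. Meps N feps eps = {\<mu>}) \<longrightarrow>
            ((\<lambda>eps. diamM (Meps N feps eps)) \<longlongrightarrow> 0) (at_right 0))
       \<and> ((\<exists>\<mu>. Mlim N feps = {\<mu>}) \<longrightarrow>
            ((\<lambda>eps. diamM (Meps N feps eps)) \<longlongrightarrow> 0) (at_right 0))
       \<and> (((\<lambda>eps. diamM (Meps N feps eps)) \<longlongrightarrow> 0) (at_right 0) \<longrightarrow>
            uniformly_approached N feps)
       \<and> (uniformly_approached N feps \<longrightarrow>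
            Liminf (at_right 0) (\<lambda>eps. ereal (diamM (Meps N feps eps))) = 0)"
proof -
  note pert = assms
  define d where "d e = diamM (Meps N feps e)" for e
  have dd: "(\<lambda>eps. diamM (Meps N feps eps)) = d" by (simp add: d_def fun_eq_iff)
  have ne: "Meps N feps e \<noteq> {}" if "e > 0" for e using Meps_nonempty[OF pert that] .
  have sub: "Meps N feps e \<subseteq> SIM" for e by (rule Meps_SIM)
  have dle: "dM \<mu> \<nu> \<le> d e" if "e > 0" "\<mu> \<in> Meps N feps e" "\<nu> \<in> Meps N feps e" for e \<mu> \<nu>
    unfolding d_def using diam_facts(1)[OF sub ne[OF that(1)]] that(2,3) .
  have dnn: "0 \<le> d e" if "e > 0" for e
    unfolding d_def using diam_facts(2)[OF sub ne[OF that]] .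
  have dgt: "\<exists>\<mu>\<in>Meps N feps e. \<exists>\<nu>\<in>Meps N feps e. \<delta> < dM \<mu> \<nu>" if "e > 0" "\<delta> < d e" for e \<delta>
    using diam_facts(3)[OF sub ne[OF that(1)]] that(2) unfolding d_def by blast
  have MS_M: "MS \<mu>" if "\<mu> \<in> Meps N feps e" for \<mu> e using sub that SIM_MS by blast
  have ev_pos: "eventually (\<lambda>e. 0 < e) (at_right (0::real))" by (rule eventually_at_right_less)

  have P1: "(\<forall>eps>0. \<exists>\<mu>. Meps N feps eps = {\<mu>}) \<longrightarrow> (d \<longlongrightarrow> 0) (at_right 0)"
  proof
    assume H: "\<forall>eps>0. \<exists>\<mu>. Meps N feps eps = {\<mu>}"
    have "eventually (\<lambda>e. d e = 0) (at_right 0)"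
      using ev_pos
    proof (rule eventually_mono)
      fix e :: real assume "0 < e"
      then obtain \<mu> where \<mu>: "Meps N feps e = {\<mu>}" using H by blast
      have "{dM a b |a b. a \<in> {\<mu>} \<and> b \<in> {\<mu>}} = {0}" by auto
      then show "d e = 0" by (simp add: d_def diamM_def \<mu>)
    qed
    then show "(d \<longlongrightarrow> 0) (at_right 0)" by (rule tendsto_eventually)
  qed

  have P3: "(d \<longlongrightarrow> 0) (at_right 0) \<longrightarrow> uniformly_approached N feps"
  proof
    assume dl: "(d \<longlongrightarrow> 0) (at_right 0)"
    show "uniformly_approached N feps" unfolding uniformly_approached_def
    proof (intro allI impI)
      fix \<pi> assume hp: "\<forall>eps>0. \<pi> eps \<in> Meps N feps eps"
      show "acc_pts \<pi> = Mlim N feps"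
      proof
        show "acc_pts \<pi> \<subseteq> Mlim N feps"
        proof
          fix \<mu> assume "\<mu> \<in> acc_pts \<pi>"
          then obtain e where e: "\<mu> \<in> SIM" "\<forall>n. e n > 0" "e \<longlonglongrightarrow> 0" "(\<lambda>n. dM (\<pi> (e n)) \<mu>) \<longlonglongrightarrow> 0"
            unfolding acc_pts_def by blast
          have "\<forall>n. \<pi> (e n) \<in> Meps N feps (e n)" using hp e(2) by blast
          then show "\<mu> \<in> Mlim N feps" using e by (intro MlimI[where e=e and m="\<lambda>n. \<pi> (e n)"]) auto
        qed
      next
        show "Mlim N feps \<subseteq> acc_pts \<pi>"
        proof
          fix \<mu> assume "\<mu> \<in> Mlim N feps"
          then obtain e m where em: "\<mu> \<in> SIM" "\<forall>n. e n > 0" "e \<longlonglongrightarrow> 0"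
            "\<forall>n. m n \<in> Meps N feps (e n)" "(\<lambda>n. dM (m n) \<mu>) \<longlonglongrightarrow> 0"
            unfolding Mlim_def by blast
          have fe: "filterlim e (at_right 0) sequentially"
            by (rule tendsto_imp_filterlim_at_right[OF em(3)]) (use em(2) in \<open>simp add: always_eventually\<close>)
          have de: "(\<lambda>n. d (e n)) \<longlonglongrightarrow> 0" by (rule filterlim_compose[OF dl fe])
          have "(\<lambda>n. dM (\<pi> (e n)) \<mu>) \<longlonglongrightarrow> 0"
          proof (rule tendsto_sandwich[where f="\<lambda>_. 0" and h="\<lambda>n. d (e n) + dM (m n) \<mu>"])
            have msp: "MS (\<pi> (e n))" for n using hp em(2) MS_M by blast
            have msm: "MS (m n)" for n using em(4) MS_M by blast
            have ms\<mu>: "MS \<mu>" using em(1) SIM_MS by blast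
            show "\<forall>\<^sub>F n in sequentially. 0 \<le> dM (\<pi> (e n)) \<mu>"
              using msp ms\<mu> dM_nonneg by (intro always_eventually) blast
            show "\<forall>\<^sub>F n in sequentially. dM (\<pi> (e n)) \<mu> \<le> d (e n) + dM (m n) \<mu>"
            proof (intro always_eventually allI)
              fix n
              have "dM (\<pi> (e n)) \<mu> \<le> dM (\<pi> (e n)) (m n) + dM (m n) \<mu>"
                by (rule dM_tri[OF msp msm ms\<mu>])
              also have "dM (\<pi> (e n)) (m n) \<le> d (e n)"
                using dle[of "e n" "\<pi> (e n)" "m n"] hp em(2,4) by blast
              finally show "dM (\<pi> (e n)) \<mu> \<le> d (e n) + dM (m n) \<mu>" by simp
            qed
            show "(\<lambda>n. d (e n) + dM (m n) \<mu>) \<longlonglongrightarrow> 0"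
              using tendsto_add[OF de em(5)] by simp
          qed simp
          then show "\<mu> \<in> acc_pts \<pi>" using em(1-3) by (intro acc_ptsI[where e=e]) auto
        qed
      qed
    qed
  qed

  have P2: "(\<exists>\<mu>. Mlim N feps = {\<mu>}) \<longrightarrow> (d \<longlongrightarrow> 0) (at_right 0)"
  proof
    assume "\<exists>\<mu>. Mlim N feps = {\<mu>}"
    then obtain \<mu>0 where M0: "Mlim N feps = {\<mu>0}" by blast
    show "(d \<longlongrightarrow> 0) (at_right 0)"
    proof (rule tendstoI)
      fix \<delta> :: real assume \<delta>: "\<delta> > 0"
      show "eventually (\<lambda>e. dist (d e) 0 < \<delta>) (at_right 0)"
      proof (rule ccontr)
        assume "\<not> eventually (\<lambda>e. dist (d e) 0 < \<delta>) (at_right 0)"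
        then have "\<forall>b>0. \<exists>y>0. y < b \<and> \<not> dist (d y) 0 < \<delta>"
          unfolding eventually_at_right_field by auto
        then have "\<forall>k::nat. \<exists>y>0. y < 1 / real (Suc k) \<and> \<not> dist (d y) 0 < \<delta>" by simp
        then obtain e where e: "\<And>k. e k > 0" "\<And>k. e k < 1 / real (Suc k)" "\<And>k. \<not> dist (d (e k)) 0 < \<delta>"
          by metis
        have "\<forall>k. \<exists>\<mu>\<in>Meps N feps (e k). \<exists>\<nu>\<in>Meps N feps (e k). \<delta>/2 < dM \<mu> \<nu>"
        proof
          fix k
          have "\<delta>/2 < d (e k)" using e(3)[of k] dnn[OF e(1)] \<delta> by (simp add: dist_real_def)
          then show "\<exists>\<mu>\<in>Meps N feps (e k). \<exists>\<nu>\<in>Meps N feps (e k). \<delta>/2 < dM \<mu> \<nu>" by (rule dgt[OF e(1)])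
        qed
        then obtain \<mu> \<nu> where \<mu>\<nu>: "\<And>k. \<mu> k \<in> Meps N feps (e k)" "\<And>k. \<nu> k \<in> Meps N feps (e k)"
          "\<And>k. \<delta>/2 < dM (\<mu> k) (\<nu> k)"
          by metis
        have e0: "e \<longlonglongrightarrow> 0"
        proof (rule tendsto_sandwich[where f="\<lambda>_. 0" and h="\<lambda>k. 1 / real (Suc k)"])
          show "\<forall>\<^sub>F n in sequentially. 0 \<le> e n" using e(1) by (intro always_eventually) (simp add: less_imp_le)
          show "\<forall>\<^sub>F n in sequentially. e n \<le> 1 / real (Suc n)" using e(2) by (intro always_eventually) (simp add: less_imp_le)
          show "(\<lambda>k. 1 / real (Suc k)) \<longlonglongrightarrow> 0" by (rule LIMSEQ_Suc[OF lim_const_over_n])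
        qed simp
        have \<mu>S: "\<mu> k \<in> SIM" for k using \<mu>\<nu>(1) sub by blast
        have \<nu>S: "\<nu> k \<in> SIM" for k using \<mu>\<nu>(2) sub by blast
        obtain r1 m1 where r1: "strict_mono r1" "m1 \<in> SIM" "(\<lambda>k. dM (\<mu> (r1 k)) m1) \<longlonglongrightarrow> 0"
          using seq_compact_SIM[of \<mu>, OF \<mu>S] by blast
        obtain r2 m2 where r2: "strict_mono r2" "m2 \<in> SIM" "(\<lambda>k. dM (\<nu> (r1 (r2 k))) m2) \<longlonglongrightarrow> 0"
          using seq_compact_SIM[of "\<lambda>k. \<nu> (r1 k)", OF \<nu>S] by blast
        have er1: "(\<lambda>k. e (r1 k)) \<longlonglongrightarrow> 0" using LIMSEQ_subseq_LIMSEQ[OF e0 r1(1)] by (simp add: o_def)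
        have er12: "(\<lambda>k. e (r1 (r2 k))) \<longlonglongrightarrow> 0" using LIMSEQ_subseq_LIMSEQ[OF er1 r2(1)] by (simp add: o_def)
        have "m1 \<in> Mlim N feps"
          by (rule MlimI[where e="\<lambda>k. e (r1 k)" and m="\<lambda>k. \<mu> (r1 k)"]) (use r1(2,3) er1 e(1) \<mu>\<nu>(1) in auto)
        then have m1: "m1 = \<mu>0" using M0 by blast
        have "m2 \<in> Mlim N feps"
          by (rule MlimI[where e="\<lambda>k. e (r1 (r2 k))" and m="\<lambda>k. \<nu> (r1 (r2 k))"]) (use r2(2,3) er12 e(1) \<mu>\<nu>(2) in auto)
        then have m2: "m2 = \<mu>0" using M0 by blast
        have a1: "(\<lambda>k. dM (\<mu> (r1 (r2 k))) \<mu>0) \<longlonglongrightarrow> 0"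
          using LIMSEQ_subseq_LIMSEQ[OF r1(3) r2(1)] m1 by (simp add: o_def)
        have a2: "(\<lambda>k. dM (\<nu> (r1 (r2 k))) \<mu>0) \<longlonglongrightarrow> 0" using r2(3) m2 by simp
        have ms0: "MS \<mu>0" using r1(2) m1 SIM_MS by blast
        have "(\<lambda>k. dM (\<mu> (r1 (r2 k))) (\<nu> (r1 (r2 k)))) \<longlonglongrightarrow> 0"
        proof (rule tendsto_sandwich[where f="\<lambda>_. 0" and h="\<lambda>k. dM (\<mu> (r1 (r2 k))) \<mu>0 + dM (\<nu> (r1 (r2 k))) \<mu>0"])
          show "\<forall>\<^sub>F k in sequentially. 0 \<le> dM (\<mu> (r1 (r2 k))) (\<nu> (r1 (r2 k)))"
            using \<mu>S \<nu>S SIM_MS dM_nonneg by (intro always_eventually) blast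
          show "\<forall>\<^sub>F k in sequentially. dM (\<mu> (r1 (r2 k))) (\<nu> (r1 (r2 k))) \<le> dM (\<mu> (r1 (r2 k))) \<mu>0 + dM (\<nu> (r1 (r2 k))) \<mu>0"
          proof (intro always_eventually allI)
            fix k
            show "dM (\<mu> (r1 (r2 k))) (\<nu> (r1 (r2 k))) \<le> dM (\<mu> (r1 (r2 k))) \<mu>0 + dM (\<nu> (r1 (r2 k))) \<mu>0"
              using dM_tri[OF SIM_MS[OF \<mu>S] ms0 SIM_MS[OF \<nu>S], of "r1 (r2 k)" "r1 (r2 k)"]
              by (simp add: dM_sym[of \<mu>0])
          qed
          show "(\<lambda>k. dM (\<mu> (r1 (r2 k))) \<mu>0 + dM (\<nu> (r1 (r2 k))) \<mu>0) \<longlonglongrightarrow> 0"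
            using tendsto_add[OF a1 a2] by simp
        qed simp
        then have "eventually (\<lambda>k. dM (\<mu> (r1 (r2 k))) (\<nu> (r1 (r2 k))) < \<delta>/2) sequentially"
          using \<delta> by (intro order_tendstoD(2)) auto
        then obtain k where "dM (\<mu> (r1 (r2 k))) (\<nu> (r1 (r2 k))) < \<delta>/2"
          by (auto simp: eventually_sequentially)
        then show False using \<mu>\<nu>(3)[of "r1 (r2 k)"] by simp
      qed
    qed
  qed

  have P4: "uniformly_approached N feps \<longrightarrow> Liminf (at_right 0) (\<lambda>eps. ereal (d eps)) = 0"
  proof
    assume UA: "uniformly_approached N feps"
    show "Liminf (at_right 0) (\<lambda>eps. ereal (d eps)) = 0"
    proof (rule antisym)
      show "0 \<le> Liminf (at_right 0) (\<lambda>eps. ereal (d eps))"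
        by (rule Liminf_bounded) (use ev_pos in \<open>rule eventually_mono, simp add: dnn\<close>)
    next
      show "Liminf (at_right 0) (\<lambda>eps. ereal (d eps)) \<le> 0"
      proof (rule ccontr)
        assume "\<not> Liminf (at_right 0) (\<lambda>eps. ereal (d eps)) \<le> 0"
        then have "0 < Liminf (at_right 0) (\<lambda>eps. ereal (d eps))" by simp
        then obtain \<delta> where \<delta>: "0 < ereal \<delta>" "ereal \<delta> < Liminf (at_right 0) (\<lambda>eps. ereal (d eps))"
          using ereal_dense2 by blast
        have \<delta>0: "\<delta> > 0" using \<delta>(1) by simp
        have "eventually (\<lambda>e. ereal \<delta> < ereal (d e)) (at_right 0)"
          using le_Liminf_iff[THEN iffD1, OF order_refl] \<delta>(2) by blast
        then have "eventually (\<lambda>e. \<delta> < d e) (at_right 0)" by simp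
        then obtain t where t: "t > 0" "\<And>y. y > 0 \<Longrightarrow> y < t \<Longrightarrow> \<delta> < d y"
          unfolding eventually_at_right_field by auto
        define \<pi>0 where "\<pi>0 e = (SOME \<mu>. \<mu> \<in> Meps N feps e)" for e
        have \<pi>0: "\<pi>0 e \<in> Meps N feps e" if "e > 0" for e
          unfolding \<pi>0_def using ne[OF that] by (simp add: some_in_eq)
        define sq where "sq k = \<pi>0 (1 / real (Suc k))" for k
        have sqM: "sq k \<in> Meps N feps (1 / real (Suc k))" for k unfolding sq_def by (rule \<pi>0) simp
        have sqS: "sq k \<in> SIM" for k using sqM sub by blast
        obtain r m0 where r: "strict_mono r" "m0 \<in> SIM" "(\<lambda>k. dM (sq (r k)) m0) \<longlonglongrightarrow> 0"
          using seq_compact_SIM[of sq, OF sqS] by blast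
        have "(\<lambda>k. 1 / real (Suc (r k))) \<longlonglongrightarrow> 0"
          using LIMSEQ_subseq_LIMSEQ[OF LIMSEQ_Suc[OF lim_const_over_n] r(1)] by (simp add: o_def)
        then have m0: "m0 \<in> Mlim N feps"
          by (intro MlimI[where e="\<lambda>k. 1 / real (Suc (r k))" and m="\<lambda>k. sq (r k)"]) (use r(2,3) sqM in auto)
        have ms0: "MS m0" using r(2) SIM_MS by blast
        define \<pi> where "\<pi> e = (SOME \<mu>. \<mu> \<in> Meps N feps e \<and> (e < t \<longrightarrow> \<delta>/2 < dM \<mu> m0))" for e
        have \<pi>: "\<pi> e \<in> Meps N feps e \<and> (e < t \<longrightarrow> \<delta>/2 < dM (\<pi> e) m0)" if e: "e > 0" for e
        proof -
          have "\<exists>\<mu>. \<mu> \<in> Meps N feps e \<and> (e < t \<longrightarrow> \<delta>/2 < dM \<mu> m0)"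
          proof (cases "e < t")
            case True
            then obtain a b where ab: "a \<in> Meps N feps e" "b \<in> Meps N feps e" "\<delta> < dM a b"
              using dgt[OF e t(2)[OF e True]] by blast
            have "dM a b \<le> dM a m0 + dM m0 b" by (rule dM_tri[OF MS_M[OF ab(1)] ms0 MS_M[OF ab(2)]])
            then have "\<delta>/2 < dM a m0 \<or> \<delta>/2 < dM b m0" using ab(3) dM_sym[of m0 b] by linarith
            then show ?thesis using ab by blast
          next
            case False
            then show ?thesis using \<pi>0[OF e] by blast
          qed
          then show ?thesis unfolding \<pi>_def by (rule someI_ex)
        qed
        have "m0 \<in> acc_pts \<pi>"
          using UA \<pi> m0 unfolding uniformly_approached_def by blast
        then have "\<exists>e. (\<forall>n. e n > 0) \<and> e \<longlonglongrightarrow> 0 \<and> (\<lambda>n. dM (\<pi> (e n)) m0) \<longlonglongrightarrow> 0"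
          unfolding acc_pts_def by (rule CollectE) (rule conjunct2)
        then obtain e where e: "\<forall>n. e n > 0" "e \<longlonglongrightarrow> 0" "(\<lambda>n. dM (\<pi> (e n)) m0) \<longlonglongrightarrow> 0"
          by blast
        have "eventually (\<lambda>n. e n < t) sequentially" using e(2) t(1) by (intro order_tendstoD(2)) auto
        moreover have "eventually (\<lambda>n. dM (\<pi> (e n)) m0 < \<delta>/2) sequentially"
          using e(3) \<delta>0 by (intro order_tendstoD(2)) auto
        ultimately have "eventually (\<lambda>n. e n < t \<and> dM (\<pi> (e n)) m0 < \<delta>/2) sequentially"
          by (rule eventually_conj)
        then obtain n where n: "e n < t" "dM (\<pi> (e n)) m0 < \<delta>/2"
          by (auto simp: eventually_sequentially)
        then show False using \<pi>[of "e n"] e(1) by force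
      qed
    qed
  qed
  have dd2: "(\<lambda>eps. ereal (diamM (Meps N feps eps))) = (\<lambda>eps. ereal (d eps))" by (simp add: d_def)
  show ?thesis unfolding dd dd2 using P1 P2 P3 P4 by blast
qed

end
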